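(* For every $\varepsilon>0$ there is a connected graph $G$ such that \[ \frac{\operatorname{mdim}(G)}{\operatorname{cdim}(G)}\leq\varepsilon. \]
   Context: All graphs are finite, simple, undirected and nonempty. For distinct vertices $v,w$, $\kappa(v,w)$ is the maximum number of internally vertex-disjoint $v$–$w$ paths (an edge $vw$ counts as one such path); $\kappa(v,v)=\infty$. For an ordered vertex set $W=(w_1,\ldots,w_k)$, $r_G(v,W)=[\kappa(v,w_1),\ldots,\kappa(v,w_k)]$. $W$ is resolving if $r_G(v_1,W)=r_G(v_2,W)$ implies $v_1=v_2$. The connectivity dimension $\operatorname{cdim}(G)$ is the minimum cardinality of a resolving set. The metric dimension $\operatorname{mdim}(G)$ of a connected graph is the minimum cardinality of a set $W=(w_1,\dots,w_k)$ such that the vectors $[d(v,w_1),\ldots,d(v,w_k)]$ of graph distances are pairwise distinct over $v\in V(G)$. *)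

theory Defs
  imports Main "HOL-Library.Extended_Nat"
begin

definition simple_graph :: "'a set \<Rightarrow> ('a \<Rightarrow> 'a \<Rightarrow> bool) \<Rightarrow> bool" where
  "simple_graph V E \<longleftrightarrow> finite V \<and> V \<noteq> {} \<and>
     (\<forall>x y. E x y \<longrightarrow> x \<in> V \<and> y \<in> V) \<and>
     (\<forall>x y. E x y \<longrightarrow> E y x) \<and> (\<forall>x. \<not> E x x)"

definition is_path :: "'a set \<Rightarrow> ('a \<Rightarrow> 'a \<Rightarrow> bool) \<Rightarrow> 'a list \<Rightarrow> bool" where
  "is_path V E p \<longleftrightarrow> p \<noteq> [] \<and> distinct p \<and> set p \<subseteq> V \<and>
     (\<forall>i. Suc i < length p \<longrightarrow> E (p ! i) (p ! Suc i))"

definition vw_path :: "'a set \<Rightarrow> ('a \<Rightarrow> 'a \<Rightarrow> bool) \<Rightarrow> 'a \<Rightarrow> 'a \<Rightarrow> 'a list \<Rightarrow> bool" where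
  "vw_path V E v w p \<longleftrightarrow> is_path V E p \<and> hd p = v \<and> last p = w"

definition interior :: "'a list \<Rightarrow> 'a set" where
  "interior p = set (butlast (tl p))"

definition graph_connected :: "'a set \<Rightarrow> ('a \<Rightarrow> 'a \<Rightarrow> bool) \<Rightarrow> bool" where
  "graph_connected V E \<longleftrightarrow> (\<forall>v\<in>V. \<forall>w\<in>V. \<exists>p. vw_path V E v w p)"

text \<open>Local connectivity kappa(v,w): maximum number of internally vertex-disjoint
v-w paths (a set of paths, so the edge vw counts once); infinity for v = w.\<close>
definition kappa :: "'a set \<Rightarrow> ('a \<Rightarrow> 'a \<Rightarrow> bool) \<Rightarrow> 'a \<Rightarrow> 'a \<Rightarrow> enat" where
  "kappa V E v w = (if v = w then \<infinity> else
     (SUP P \<in> {P. finite P \<and> (\<forall>p\<in>P. vw_path V E v w p) \<and>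
                 (\<forall>p\<in>P. \<forall>q\<in>P. p \<noteq> q \<longrightarrow> interior p \<inter> interior q = {})}.
        enat (card P)))"

definition gdist :: "'a set \<Rightarrow> ('a \<Rightarrow> 'a \<Rightarrow> bool) \<Rightarrow> 'a \<Rightarrow> 'a \<Rightarrow> nat" where
  "gdist V E v w = (LEAST n. \<exists>p. vw_path V E v w p \<and> length p = Suc n)"

definition resolving :: "'a set \<Rightarrow> ('a \<Rightarrow> 'a \<Rightarrow> 'b) \<Rightarrow> 'a set \<Rightarrow> bool" where
  "resolving V f W \<longleftrightarrow> W \<subseteq> V \<and>
     (\<forall>x\<in>V. \<forall>y\<in>V. (\<forall>w\<in>W. f x w = f y w) \<longrightarrow> x = y)"

definition cdim :: "'a set \<Rightarrow> ('a \<Rightarrow> 'a \<Rightarrow> bool) \<Rightarrow> nat" where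
  "cdim V E = (LEAST k. \<exists>W. resolving V (kappa V E) W \<and> card W = k)"

definition mdim :: "'a set \<Rightarrow> ('a \<Rightarrow> 'a \<Rightarrow> bool) \<Rightarrow> nat" where
  "mdim V E = (LEAST k. \<exists>W. resolving V (gdist V E) W \<and> card W = k)"

end

theory Submission
  imports Defs
begin

definition pE :: "nat \<Rightarrow> nat \<Rightarrow> nat \<Rightarrow> bool" where
  "pE n x y \<longleftrightarrow> x < n \<and> y < n \<and> (y = Suc x \<or> x = Suc y)"

lemma ivt:
  assumes adj: "\<forall>k. Suc k < length p \<longrightarrow> (p!Suc k = Suc (p!k) \<or> p!k = Suc (p!Suc k))"
  shows "i \<le> j \<Longrightarrow> j < length p \<Longrightarrow> min (p!i) (p!j) \<le> c \<Longrightarrow> c \<le> max (p!i) (p!j)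
    \<Longrightarrow> \<exists>k. i \<le> k \<and> k \<le> j \<and> p!k = c"
proof (induction j)
  case 0 then show ?case by auto
next
  case (Suc j)
  show ?case
  proof (cases "i = Suc j")
    case True then show ?thesis using Suc by auto
  next
    case False
    then have ij: "i \<le> j" using Suc by auto
    have a: "p!Suc j = Suc (p!j) \<or> p!j = Suc (p!Suc j)" using adj Suc by auto
    show ?thesis
    proof (cases "min (p!i) (p!j) \<le> c \<and> c \<le> max (p!i) (p!j)")
      case True
      then obtain k where "i \<le> k \<and> k \<le> j \<and> p!k = c" using Suc.IH ij Suc.prems by auto
      then show ?thesis by (intro exI[of _ k]) auto
    next
      case False
      then have "c = p!Suc j" using a Suc.prems by auto
      then show ?thesis using Suc.prems by auto
    qed
  qed
qed

lemma path_adj: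
  assumes "is_path V (pE n) p"
  shows "\<forall>k. Suc k < length p \<longrightarrow> (p!Suc k = Suc (p!k) \<or> p!k = Suc (p!Suc k))"
  using assms unfolding is_path_def pE_def by auto

lemma path_set:
  assumes "vw_path V (pE n) a b p"
  shows "set p = {min a b..max a b}"
proof -
  have P: "is_path V (pE n) p" and ha: "hd p = a" and lb: "last p = b" using assms by (auto simp: vw_path_def)
  have ne: "p \<noteq> []" and dis: "distinct p" using P by (auto simp: is_path_def)
  have adj: "\<forall>k. Suc k < length p \<longrightarrow> (p!Suc k = Suc (p!k) \<or> p!k = Suc (p!Suc k))"
    using path_adj[OF P] .
  define L where "L = length p - 1"
  have L: "L < length p" using ne by (simp add: L_def)
  have a0: "p!0 = a" using ha ne by (simp add: hd_conv_nth)
  have bL: "p!L = b" using lb ne by (simp add: last_conv_nth L_def)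
  show ?thesis
  proof
    show "{min a b..max a b} \<subseteq> set p"
    proof
      fix c assume "c \<in> {min a b..max a b}"
      then obtain k where "k \<le> L" "p!k = c" using ivt[OF adj, of 0 L c] a0 bL L by auto
      then show "c \<in> set p" using L by auto
    qed
  next
    show "set p \<subseteq> {min a b..max a b}"
    proof
      fix x assume "x \<in> set p"
      then obtain k where k: "k < length p" "p!k = x" by (auto simp: in_set_conv_nth)
      have kL: "k \<le> L" using k L_def by auto
      show "x \<in> {min a b..max a b}"
      proof (rule ccontr)
        assume out: "x \<notin> {min a b..max a b}"
        consider "a \<le> b" "b < x" | "b < a" "a < x" | "a \<le> b" "x < a" | "b < a" "x < b"
          using out by (auto simp: min_def max_def split: if_splits)
        then show False
        proof cases
          case 1
          then obtain k' where "k' \<le> k" "p!k' = b" using ivt[OF adj, of 0 k b] a0 k by auto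
          then have "k' = L" using nth_eq_iff_index_eq[OF dis, of k' L] bL L k by auto
          then show False using kL \<open>k' \<le> k\<close> bL k 1 by auto
        next
          case 2
          then obtain k' where "k \<le> k'" "k' \<le> L" "p!k' = a" using ivt[OF adj, of k L a] bL k kL L by auto
          then have "k' = 0" using nth_eq_iff_index_eq[OF dis, of k' 0] a0 L ne by auto
          then show False using \<open>k \<le> k'\<close> a0 k 2 by auto
        next
          case 3
          then obtain k' where "k \<le> k'" "k' \<le> L" "p!k' = a" using ivt[OF adj, of k L a] bL k kL L by auto
          then have "k' = 0" using nth_eq_iff_index_eq[OF dis, of k' 0] a0 L ne by auto
          then show False using \<open>k \<le> k'\<close> a0 k 3 by auto
        next
          case 4
          then obtain k' where "k' \<le> k" "p!k' = b" using ivt[OF adj, of 0 k b] a0 k by auto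
          then have "k' = L" using nth_eq_iff_index_eq[OF dis, of k' L] bL L k by auto
          then show False using kL \<open>k' \<le> k\<close> bL k 4 by auto
        qed
      qed
    qed
  qed
qed

lemma path_len:
  assumes "vw_path V (pE n) a b p"
  shows "length p = Suc (max a b - min a b)"
proof -
  have "distinct p" using assms by (auto simp: vw_path_def is_path_def)
  then have "length p = card (set p)" by (simp add: distinct_card)
  then show ?thesis using path_set[OF assms] by simp
qed

definition pl :: "nat \<Rightarrow> nat \<Rightarrow> nat list" where
  "pl a b = (if a \<le> b then [a..<Suc b] else rev [b..<Suc a])"

lemma pl_path:
  assumes "a < n" "b < n"
  shows "vw_path {..<n} (pE n) a b (pl a b)"
proof (cases "a \<le> b")
  case True
  then show ?thesis using assms
    by (auto simp: vw_path_def is_path_def pl_def pE_def hd_upt last_upt nth_upt simp del: upt_Suc)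
next
  case False
  then show ?thesis using assms
    by (auto simp: vw_path_def is_path_def pl_def pE_def last_rev hd_rev rev_nth nth_upt hd_upt last_upt simp del: upt_Suc)
qed

lemma in_interior:
  assumes "vw_path V E a b p" "c \<in> set p" "c \<noteq> a" "c \<noteq> b"
  shows "c \<in> interior p"
proof -
  have ne: "p \<noteq> []" using assms by (auto simp: vw_path_def is_path_def)
  then obtain t where p: "p = a # t" using assms(1) by (cases p) (auto simp: vw_path_def)
  have "c \<in> set t" using p assms by auto
  then have tne: "t \<noteq> []" by auto
  have lt: "last t = b" using assms(1) p tne by (auto simp: vw_path_def)
  have "c \<in> set (butlast t)" using tne \<open>c \<in> set t\<close> assms(4) lt
    by (metis append_butlast_last_id rotate1.simps(2) set_ConsD set_rotate1)
  then show ?thesis using p by (simp add: interior_def)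
qed

lemma kappa_one:
  assumes "a < n" "b < n" "a \<noteq> b"
  shows "kappa {..<n} (pE n) a b = 1"
proof -
  let ?S = "{P. finite P \<and> (\<forall>p\<in>P. vw_path {..<n} (pE n) a b p) \<and>
                 (\<forall>p\<in>P. \<forall>q\<in>P. p \<noteq> q \<longrightarrow> interior p \<inter> interior q = {})}"
  have mem: "{pl a b} \<in> ?S" using pl_path[OF assms(1,2)] by auto
  have le: "card P \<le> 1" if "P \<in> ?S" for P
  proof -
    have fin: "finite P" and pa: "\<forall>p\<in>P. vw_path {..<n} (pE n) a b p"
      and dj: "\<forall>p\<in>P. \<forall>q\<in>P. p \<noteq> q \<longrightarrow> interior p \<inter> interior q = {}" using that by auto
    have "\<forall>p\<in>P. \<forall>q\<in>P. p = q"
    proof (intro ballI)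
      fix p q assume p: "p \<in> P" and q: "q \<in> P"
      show "p = q"
      proof (cases "max a b - min a b \<ge> 2")
        case True
        let ?c = "Suc (min a b)"
        have pp: "vw_path {..<n} (pE n) a b p" using pa p by blast
        have qq: "vw_path {..<n} (pE n) a b q" using pa q by blast
        have cin: "?c \<in> {min a b..max a b}" using True by simp
        have c1: "?c \<in> set p" using path_set[OF pp] cin by simp
        have c2: "?c \<in> set q" using path_set[OF qq] cin by simp
        have ca: "?c \<noteq> a" "?c \<noteq> b" using True by (auto simp: max_def min_def)
        have "?c \<in> interior p" by (rule in_interior[OF pp c1 ca])
        moreover have "?c \<in> interior q" by (rule in_interior[OF qq c2 ca])
        ultimately
        show ?thesis using dj p q by blast
      next
        case False
        have d: "max a b - min a b = 1" using False assms(3) by (auto simp: max_def min_def)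
        have pp: "vw_path {..<n} (pE n) a b p" using pa p by blast
        have qq: "vw_path {..<n} (pE n) a b q" using pa q by blast
        have lp: "length p = 2" "length q = 2" using path_len[OF pp] path_len[OF qq] d by auto
        have "p = [hd p, last p]" using lp(1)
          by (auto simp: length_Suc_conv numeral_2_eq_2)
        moreover have "q = [hd q, last q]" using lp(2)
          by (auto simp: length_Suc_conv numeral_2_eq_2)
        moreover have "hd p = hd q" "last p = last q" using pp qq unfolding vw_path_def by auto
        ultimately show ?thesis by metis
      qed
    qed
    then show ?thesis using card_le_Suc0_iff_eq[OF fin] by simp
  qed
  have "(SUP P \<in> ?S. enat (card P)) = 1"
  proof (rule antisym)
    show "(SUP P \<in> ?S. enat (card P)) \<le> 1"
      by (rule SUP_least) (use le in \<open>simp add: one_enat_def\<close>)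
    have "enat (card {pl a b}) \<le> (SUP P \<in> ?S. enat (card P))"
      by (rule SUP_upper[OF mem])
    then show "1 \<le> (SUP P \<in> ?S. enat (card P))" by (simp add: one_enat_def)
  qed
  then show ?thesis using assms(3) unfolding kappa_def by (simp only: if_False)
qed

lemma gdist_eq:
  assumes "a < n" "b < n"
  shows "gdist {..<n} (pE n) a b = max a b - min a b"
  unfolding gdist_def
proof (rule Least_equality)
  show "\<exists>p. vw_path {..<n} (pE n) a b p \<and> length p = Suc (max a b - min a b)"
    using pl_path[OF assms] path_len by blast
next
  fix y assume "\<exists>p. vw_path {..<n} (pE n) a b p \<and> length p = Suc y"
  then obtain p where "vw_path {..<n} (pE n) a b p" "length p = Suc y" by blast
  then show "max a b - min a b \<le> y" using path_len by force
qed

lemma V_resolving: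
  assumes "2 \<le> n"
  shows "resolving {..<n} (kappa {..<n} (pE n)) {..<n}"
  unfolding resolving_def
proof (intro conjI ballI impI)
  fix x y assume x: "x \<in> {..<n}" and y: "y \<in> {..<n}"
    and h: "\<forall>w\<in>{..<n}. kappa {..<n} (pE n) x w = kappa {..<n} (pE n) y w"
  have "kappa {..<n} (pE n) x x = kappa {..<n} (pE n) y x" using h x by blast
  moreover have "kappa {..<n} (pE n) x x = \<infinity>" by (simp add: kappa_def)
  ultimately show "x = y" using kappa_one[of y n x] x y by (metis enat_defs(5) infinity_ne_i1 lessThan_iff)
qed simp

lemma cdim_ge:
  assumes "2 \<le> n"
  shows "n - 1 \<le> cdim {..<n} (pE n)"
proof -
  have ex: "\<exists>k W. resolving {..<n} (kappa {..<n} (pE n)) W \<and> card W = k"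
    using V_resolving[OF assms] by blast
  obtain W where W: "resolving {..<n} (kappa {..<n} (pE n)) W" "card W = cdim {..<n} (pE n)"
    using LeastI_ex[OF ex] unfolding cdim_def by blast
  have sub: "W \<subseteq> {..<n}" using W(1) by (simp add: resolving_def)
  show ?thesis
  proof (rule ccontr)
    assume "\<not> ?thesis"
    then have "card W < n - 1" using W(2) by simp
    moreover have "card ({..<n} - W) = n - card W" using sub
      by (simp add: card_Diff_subset finite_subset)
    ultimately have "\<not> card ({..<n} - W) \<le> Suc 0" by simp
    then obtain x y where xy: "x \<in> {..<n} - W" "y \<in> {..<n} - W" "x \<noteq> y"
      using card_le_Suc0_iff_eq[of "{..<n} - W"] by auto
    have "\<forall>w\<in>W. kappa {..<n} (pE n) x w = kappa {..<n} (pE n) y w"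
    proof
      fix w assume w: "w \<in> W"
      then have "w < n" "w \<noteq> x" "w \<noteq> y" using sub xy by auto
      then show "kappa {..<n} (pE n) x w = kappa {..<n} (pE n) y w"
        using kappa_one[of x n w] kappa_one[of y n w] xy by auto
    qed
    then have "x = y" using W(1) xy unfolding resolving_def by blast
    then show False using xy by simp
  qed
qed

lemma mdim_le:
  assumes "1 \<le> n"
  shows "mdim {..<n} (pE n) \<le> 1"
proof -
  have "resolving {..<n} (gdist {..<n} (pE n)) {0}"
    unfolding resolving_def using assms gdist_eq[of _ n 0] by auto
  then have "\<exists>W. resolving {..<n} (gdist {..<n} (pE n)) W \<and> card W = 1"
    by (intro exI[of _ "{0}"]) simp
  then show ?thesis unfolding mdim_def by (rule Least_le)
qed

lemma sg: "1 \<le> n \<Longrightarrow> simple_graph {..<n} (pE n)"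
  by (auto simp: simple_graph_def pE_def lessThan_empty_iff)

lemma conn: "graph_connected {..<n} (pE n)"
  unfolding graph_connected_def using pl_path by blast

theorem mainTheorem8:
  fixes \<epsilon> :: real
  assumes "\<epsilon> > 0"
  shows "\<exists>(V :: nat set) E. simple_graph V E \<and> graph_connected V E \<and>
           cdim V E > 0 \<and> real (mdim V E) / real (cdim V E) \<le> \<epsilon>"
proof -
  obtain m :: nat where m: "1 / \<epsilon> < real m" using reals_Archimedean2 by blast
  define n where "n = m + 2"
  have c: "m + 1 \<le> cdim {..<n} (pE n)" using cdim_ge[of n] by (simp add: n_def)
  have md: "mdim {..<n} (pE n) \<le> 1" using mdim_le[of n] by (simp add: n_def)
  have "real (mdim {..<n} (pE n)) / real (cdim {..<n} (pE n)) \<le> 1 / real (cdim {..<n} (pE n))"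
    using md by (simp add: divide_right_mono)
  also have "\<dots> \<le> 1 / real (m + 1)" using c by (simp add: frac_le)
  also have "\<dots> \<le> \<epsilon>" using m assms by (simp add: field_simps)
  finally show ?thesis using sg[of n] conn[of n] c n_def by (intro exI[of _ "{..<n}"] exI[of _ "pE n"]) auto
qed

end
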